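(* Let $(\Omega,\mathcal{F},\mathbb{P})$ be a purely atomic probability space and let $\mathcal{A}\subset L^0_+$ be solid. Then $\mathcal{A}$ is tight if and only if $\mathcal{A}$ is radially bounded.
   Context: An atom is a set $A\in\mathcal{F}$ with $\mathbb{P}(A)>0$ such that every $E\in\mathcal{F}$ with $E\subset A$ satisfies $\mathbb{P}(E)=0$ or $\mathbb{P}(E)=\mathbb{P}(A)$; the space is purely atomic if every $E\in\mathcal{F}$ with $\mathbb{P}(E)>0$ contains an atom. $L^0$ denotes the space of real-valued measurable functions on $\Omega$ modulo $\mathbb{P}$-a.s. equality, ordered by $X\ge Y$ iff $\mathbb{P}(X\ge Y)=1$; $L^0_+=\{X\in L^0: X\ge 0\}$. A set $\mathcal{A}\subset L^0$ is solid if $X\in\mathcal{A}$ and $|Y|\le|X|$ imply $Y\in\mathcal{A}$. A set $\mathcal{A}$ is radially bounded if for every $X\in\mathcal{A}\setminus\{0\}$ there exists $\lambda_X\in(0,\infty)$ such that $\lambda X\notin\mathcal{A}$ for all $\lambda\in(\lambda_X,\infty)$. A set $\mathcal{A}$ is tight if for every $\varepsilon>0$ there exists $M>0$ with $\sup_{X\in\mathcal{A}}\mathbb{P}(|X|>M)<\varepsilon$. *)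

theory Defs
  imports "HOL-Probability.Probability"
begin

text \<open>Random variables are represented by measurable functions; elements of
  L^0 are their classes modulo a.s. equality.  All notions below are invariant
  under a.s. modification (for solid sets).\<close>

definition atom :: "'a measure \<Rightarrow> 'a set \<Rightarrow> bool" where
  "atom M A \<longleftrightarrow> A \<in> sets M \<and> measure M A > 0 \<and>
     (\<forall>E\<in>sets M. E \<subseteq> A \<longrightarrow> measure M E = 0 \<or> measure M E = measure M A)"

definition purely_atomic :: "'a measure \<Rightarrow> bool" where
  "purely_atomic M \<longleftrightarrow>
     (\<forall>E\<in>sets M. measure M E > 0 \<longrightarrow> (\<exists>A. A \<subseteq> E \<and> atom M A))"

definition L0_pos :: "'a measure \<Rightarrow> ('a \<Rightarrow> real) set" where
  "L0_pos M = {X. X \<in> borel_measurable M \<and> (AE \<omega> in M. 0 \<le> X \<omega>)}"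

definition solid :: "'a measure \<Rightarrow> ('a \<Rightarrow> real) set \<Rightarrow> bool" where
  "solid M \<A> \<longleftrightarrow> (\<forall>X\<in>\<A>. \<forall>Y\<in>L0_pos M.
      (AE \<omega> in M. \<bar>Y \<omega>\<bar> \<le> \<bar>X \<omega>\<bar>) \<longrightarrow> Y \<in> \<A>)"

definition radially_bounded :: "'a measure \<Rightarrow> ('a \<Rightarrow> real) set \<Rightarrow> bool" where
  "radially_bounded M \<A> \<longleftrightarrow> (\<forall>X\<in>\<A>. \<not> (AE \<omega> in M. X \<omega> = 0) \<longrightarrow>
      (\<exists>c>0. \<forall>t::real. t > c \<longrightarrow> (\<lambda>\<omega>. t * X \<omega>) \<notin> \<A>))"

text \<open>sup_{X in A} P(|X|>M) < eps, written without Sup (A may be empty).\<close>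
definition tight :: "'a measure \<Rightarrow> ('a \<Rightarrow> real) set \<Rightarrow> bool" where
  "tight M \<A> \<longleftrightarrow> (\<forall>\<epsilon>>0. \<exists>K>0. \<exists>\<delta><\<epsilon>. \<forall>X\<in>\<A>.
      measure M {\<omega>\<in>space M. \<bar>X \<omega>\<bar> > K} \<le> \<delta>)"

end

theory Submission
  imports Defs
begin

lemma tight_imp_rb:
  fixes M :: "'a measure" and \<A> :: "('a \<Rightarrow> real) set"
  assumes P: "prob_space M" and sub: "\<A> \<subseteq> L0_pos M" and T: "tight M \<A>"
  shows "radially_bounded M \<A>"
  unfolding radially_bounded_def
proof (intro ballI impI)
  interpret prob_space M by fact
  fix X assume X: "X \<in> \<A>" and nz: "\<not> (AE \<omega> in M. X \<omega> = 0)"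
  have Xm: "X \<in> borel_measurable M" using X sub by (auto simp: L0_pos_def)
  define S where "S k = {\<omega>\<in>space M. \<bar>X \<omega>\<bar> > 1 / (real k + 1)}" for k
  have Ss: "S k \<in> sets M" for k unfolding S_def using Xm by measurable
  have "\<exists>k. S k \<notin> null_sets M"
  proof (rule ccontr)
    assume "\<not> ?thesis"
    hence "\<Union>(range S) \<in> null_sets M" by (auto intro: null_sets_UN)
    moreover have "{\<omega>\<in>space M. \<not> X \<omega> = 0} \<subseteq> \<Union>(range S)"
    proof
      fix \<omega> assume "\<omega> \<in> {\<omega>\<in>space M. \<not> X \<omega> = 0}"
      hence w: "\<omega> \<in> space M" "\<bar>X \<omega>\<bar> > 0" by auto
      obtain k where "inverse (real (Suc k)) < \<bar>X \<omega>\<bar>" using reals_Archimedean w(2) by blast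
      hence "\<omega> \<in> S k" using w by (simp add: S_def field_simps inverse_eq_divide)
      thus "\<omega> \<in> \<Union>(range S)" by auto
    qed
    ultimately have "AE \<omega> in M. X \<omega> = 0" by (rule AE_I')
    with nz show False by simp
  qed
  then obtain k where k: "S k \<notin> null_sets M" by blast
  define \<eta> where "\<eta> = 1 / (real k + 1)"
  have eta: "\<eta> > 0" by (simp add: \<eta>_def)
  define p where "p = measure M (S k)"
  have pp: "p > 0"
  proof -
    have "p \<noteq> 0" using k Ss by (auto simp: p_def emeasure_eq_measure null_sets_def)
    thus ?thesis by (simp add: p_def order_less_le)
  qed
  obtain K \<delta> where K: "K > 0" "\<delta> < p"
    and KB: "\<And>Y. Y \<in> \<A> \<Longrightarrow> measure M {\<omega>\<in>space M. \<bar>Y \<omega>\<bar> > K} \<le> \<delta>"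
    using T pp unfolding tight_def by meson
  show "\<exists>c>0. \<forall>t. t > c \<longrightarrow> (\<lambda>\<omega>. t * X \<omega>) \<notin> \<A>"
  proof (intro exI[of _ "K / \<eta>"] conjI allI impI)
    show "K / \<eta> > 0" using K eta by simp
    fix t assume t: "t > K / \<eta>"
    show "(\<lambda>\<omega>. t * X \<omega>) \<notin> \<A>"
    proof
      assume tA: "(\<lambda>\<omega>. t * X \<omega>) \<in> \<A>"
      have tp: "t > 0" using t K eta by (meson divide_pos_pos less_trans)
      have "S k \<subseteq> {\<omega>\<in>space M. \<bar>t * X \<omega>\<bar> > K}"
      proof
        fix \<omega> assume w: "\<omega> \<in> S k"
        hence a: "\<bar>X \<omega>\<bar> > \<eta>" "\<omega> \<in> space M" by (auto simp: S_def \<eta>_def)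
        have "K < t * \<eta>" using t eta by (simp add: field_simps)
        also have "\<dots> < t * \<bar>X \<omega>\<bar>" using a tp by simp
        finally show "\<omega> \<in> {\<omega>\<in>space M. \<bar>t * X \<omega>\<bar> > K}" using a tp by (simp add: abs_mult)
      qed
      hence "p \<le> measure M {\<omega>\<in>space M. \<bar>t * X \<omega>\<bar> > K}"
        unfolding p_def using Xm by (intro finite_measure_mono) measurable
      also have "\<dots> \<le> \<delta>" using KB[OF tA] by simp
      finally show False using K by simp
    qed
  qed
qed

lemma rb_imp_tight:
  fixes M :: "'a measure" and \<A> :: "('a \<Rightarrow> real) set"
  assumes P: "prob_space M" and PA: "purely_atomic M" and sub: "\<A> \<subseteq> L0_pos M"
    and sol: "solid M \<A>" and RB: "radially_bounded M \<A>"
  shows "tight M \<A>"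
proof (rule ccontr)
  interpret prob_space M by fact
  assume "\<not> tight M \<A>"
  then obtain \<epsilon> :: real where ep: "\<epsilon> > 0"
    and H: "\<And>K \<delta>. K > 0 \<Longrightarrow> \<delta> < \<epsilon> \<Longrightarrow> \<exists>X\<in>\<A>. measure M {\<omega>\<in>space M. \<bar>X \<omega>\<bar> > K} > \<delta>"
    unfolding tight_def by (meson not_le)
  have "\<forall>n::nat. \<exists>Y. Y \<in> \<A> \<and> measure M {\<omega>\<in>space M. \<bar>Y \<omega>\<bar> > real n + 1} > \<epsilon> / 2"
  proof
    fix n :: nat
    have "real n + 1 > 0" "\<epsilon> / 2 < \<epsilon>" using ep by auto
    from H[OF this] show "\<exists>Y. Y \<in> \<A> \<and> measure M {\<omega>\<in>space M. \<bar>Y \<omega>\<bar> > real n + 1} > \<epsilon> / 2" by blast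
  qed
  then obtain X where X: "\<And>n. X n \<in> \<A>"
    and Xp: "\<And>n. measure M {\<omega>\<in>space M. \<bar>X n \<omega>\<bar> > real n + 1} > \<epsilon> / 2"
    by metis
  have Xm: "X n \<in> borel_measurable M" for n using X sub by (auto simp: L0_pos_def)
  define S where "S n = {\<omega>\<in>space M. \<bar>X n \<omega>\<bar> > real n + 1}" for n
  have Ss: "S n \<in> sets M" for n unfolding S_def using Xm[of n] by measurable
  define T where "T N = (\<Union>n\<in>{N..}. S n)" for N
  have Ts: "T N \<in> sets M" for N unfolding T_def using Ss by auto
  have Tdec: "antimono_on UNIV T" unfolding T_def monotone_on_def
  proof (intro ballI impI subsetI)
    fix a b \<omega> assume "a \<le> b" "\<omega> \<in> (\<Union>n\<in>{b..}. S n)"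
    then obtain m where "m \<ge> b" "\<omega> \<in> S m" by auto
    with \<open>a \<le> b\<close> show "\<omega> \<in> (\<Union>n\<in>{a..}. S n)" by auto
  qed
  have TS: "measure M (T N) > \<epsilon> / 2" for N
  proof -
    have "measure M (S N) \<le> measure M (T N)"
      using Ss Ts by (intro finite_measure_mono) (auto simp: T_def)
    thus ?thesis using Xp[of N] S_def by simp
  qed
  define L where "L = \<Inter>(range T)"
  have Ls: "L \<in> sets M" unfolding L_def using Ts by auto
  have "(\<lambda>N. measure M (T N)) \<longlonglongrightarrow> measure M L"
    unfolding L_def using Ts Tdec by (intro finite_Lim_measure_decseq) auto
  hence "\<epsilon> / 2 \<le> measure M L"
    by (rule LIMSEQ_le_const) (use TS less_imp_le in blast)
  hence "measure M L > 0" using ep by simp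
  then obtain A where AL: "A \<subseteq> L" and at: "atom M A"
    using PA Ls unfolding purely_atomic_def by blast
  have As: "A \<in> sets M" and Ap: "measure M A > 0"
    and Aat: "\<And>E. E \<in> sets M \<Longrightarrow> E \<subseteq> A \<Longrightarrow> measure M E = 0 \<or> measure M E = measure M A"
    using at unfolding atom_def by auto
  have Asp: "A \<subseteq> space M" using sets.sets_into_space[OF As] .
  have key: "\<exists>n\<ge>N. measure M (A \<inter> S n) = measure M A" for N
  proof (rule ccontr)
    assume "\<not> ?thesis"
    hence z: "measure M (A \<inter> S n) = 0" if "n \<ge> N" for n
      using Aat[of "A \<inter> S n"] As Ss that by auto
    have "(\<Union>n. A \<inter> S (n + N)) \<in> null_sets M"
    proof (rule null_sets_UN)
      fix n
      have "A \<inter> S (n + N) \<in> sets M" using As Ss by auto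
      moreover have "measure M (A \<inter> S (n + N)) = 0" using z by simp
      ultimately show "A \<inter> S (n + N) \<in> null_sets M"
        by (simp add: null_sets_def emeasure_eq_measure)
    qed
    moreover have "A \<subseteq> (\<Union>n. A \<inter> S (n + N))"
    proof
      fix \<omega> assume "\<omega> \<in> A"
      hence "\<omega> \<in> A" "\<omega> \<in> T N" using AL unfolding L_def by auto
      then obtain m where "m \<ge> N" "\<omega> \<in> S m" unfolding T_def by auto
      hence "\<omega> \<in> A \<inter> S ((m - N) + N)" using \<open>\<omega> \<in> A\<close> by simp
      thus "\<omega> \<in> (\<Union>n. A \<inter> S (n + N))" by blast
    qed
    ultimately have "A \<in> null_sets M" using As null_sets_subset by blast
    hence "measure M A = 0" by (rule measure_eq_0_null_sets)
    with Ap show False by simp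
  qed
  have Ymem: "(\<lambda>\<omega>. t * indicator A \<omega>) \<in> \<A>"
    if t0: "0 \<le> t" and tn: "t \<le> real n + 1" and mn: "measure M (A \<inter> S n) = measure M A" for t n
  proof -
    have "measure M (A - (A \<inter> S n)) = measure M A - measure M (A \<inter> S n)"
      using As Ss by (intro finite_measure_Diff) auto
    hence "measure M (A - S n) = 0" using mn by (simp add: Diff_Int)
    hence N: "A - S n \<in> null_sets M" using As Ss
      by (simp add: null_sets_def emeasure_eq_measure)
    have "AE \<omega> in M. \<bar>t * indicator A \<omega>\<bar> \<le> \<bar>X n \<omega>\<bar>"
    proof (rule AE_I'[OF N])
      show "{\<omega> \<in> space M. \<not> \<bar>t * indicator A \<omega>\<bar> \<le> \<bar>X n \<omega>\<bar>} \<subseteq> A - S n"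
        using t0 tn by (auto simp: S_def indicator_def)
    qed
    moreover have "(\<lambda>\<omega>. t * indicator A \<omega>) \<in> L0_pos M"
    proof -
      have "(\<lambda>\<omega>. t * indicator A \<omega>) \<in> borel_measurable M" using As by measurable
      moreover have "AE \<omega> in M. 0 \<le> t * indicator A \<omega>" using t0 by (intro AE_I2) simp
      ultimately show ?thesis unfolding L0_pos_def by blast
    qed
    moreover have "\<forall>Y\<in>L0_pos M. (AE \<omega> in M. \<bar>Y \<omega>\<bar> \<le> \<bar>X n \<omega>\<bar>) \<longrightarrow> Y \<in> \<A>"
      using sol X[of n] unfolding solid_def by (rule bspec)
    ultimately show ?thesis by (metis (no_types))
  qed
  obtain n0 where "measure M (A \<inter> S n0) = measure M A" using key[of 0] by blast
  from Ymem[OF _ _ this, of 1] have IA: "indicator A \<in> \<A>" by simp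
  have "\<not> (AE \<omega> in M. (indicator A \<omega> :: real) = 0)"
  proof
    assume "AE \<omega> in M. (indicator A \<omega> :: real) = 0"
    moreover have "{\<omega>\<in>space M. \<not> (indicator A \<omega> :: real) = 0} = A" using Asp by (auto simp: indicator_def)
    ultimately have "emeasure M A = 0" using AE_iff_measurable[OF As] by (metis (no_types))
    thus False using Ap by (simp add: emeasure_eq_measure)
  qed
  then obtain c where c: "c > 0" and cB: "\<And>t. t > c \<Longrightarrow> (\<lambda>\<omega>. t * indicator A \<omega>) \<notin> \<A>"
    using RB IA unfolding radially_bounded_def by blast
  obtain n where n: "n \<ge> nat \<lceil>c + 1\<rceil>" "measure M (A \<inter> S n) = measure M A" using key by blast
  have "c + 1 \<le> real n + 1" using n(1) by linarith
  hence "(\<lambda>\<omega>. (c + 1) * indicator A \<omega>) \<in> \<A>" using Ymem[OF _ _ n(2)] c by simp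
  with cB[of "c + 1"] show False by simp
qed

theorem proposition3p7:
  fixes M :: "'a measure" and \<A> :: "('a \<Rightarrow> real) set"
  assumes "prob_space M"
    and "purely_atomic M"
    and "\<A> \<subseteq> L0_pos M"
    and "solid M \<A>"
  shows "tight M \<A> \<longleftrightarrow> radially_bounded M \<A>"
  using tight_imp_rb[OF assms(1,3)] rb_imp_tight[OF assms] by blast

end
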